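(* The $\alpha$-pass algorithm does not provide an approximation ratio better than $\frac12$ for the clique inference problem with nonnegative vertex potentials and entropy clique potentials $C(\mathbf{v})=\lambda\sum_{v\in V}n_v(\mathbf{v})\log n_v(\mathbf{v})$, $\lambda>0$: there is a family of such instances (indexed by the number of vertices $n$) on which the ratio of the score of the $\alpha$-pass output to the optimal score tends to at most $\frac12$ as $n\to\infty$.
   Context: Clique inference problem: there are $n$ vertices $1,\dots,n$, a finite set $V$ of values, real vertex potentials $\psi_{jv}$ ($1\le j\le n$, $v\in V$), and a clique potential $C$ depending only on the counts $n_v(\mathbf{v})=|\{j:v_j=v\}|$ (with $0\log 0=0$); the objective is $F(\mathbf{v})=\sum_j\psi_{jv_j}+C(\mathbf{v})$ over $\mathbf{v}\in V^n$. The $\alpha$-pass algorithm: for each $\alpha\in V$, sort the vertices in decreasing order of $\psi_{j\alpha}-\max_{v\neq\alpha}\psi_{jv}$; for each $k\in\{1,\dots,n\}$ form the assignment giving the first $k$ sorted vertices the value $\alpha$ and every other vertex a value $v\ne\alpha$ maximizing $\psi_{jv}$; output the formed assignment with the largest $F$ over all $\alpha$ and $k$. *)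

theory Defs
  imports Complex_Main "HOL-Library.FuncSet"
begin

definition xlogx :: "nat \<Rightarrow> real" where
  "xlogx m = (if m = 0 then 0 else real m * ln (real m))"

definition cnt :: "nat \<Rightarrow> (nat \<Rightarrow> nat) \<Rightarrow> nat \<Rightarrow> nat" where
  "cnt n x v = card {j \<in> {1..n}. x j = v}"

definition assignments :: "nat \<Rightarrow> nat set \<Rightarrow> (nat \<Rightarrow> nat) set" where
  "assignments n V = {1..n} \<rightarrow>\<^sub>E V"

definition score :: "nat \<Rightarrow> nat set \<Rightarrow> (nat \<Rightarrow> nat \<Rightarrow> real) \<Rightarrow> real \<Rightarrow> (nat \<Rightarrow> nat) \<Rightarrow> real" where
  "score n V psi lam x = (\<Sum>j=1..n. psi j (x j)) + lam * (\<Sum>v\<in>V. xlogx (cnt n x v))"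

definition opt_score :: "nat \<Rightarrow> nat set \<Rightarrow> (nat \<Rightarrow> nat \<Rightarrow> real) \<Rightarrow> real \<Rightarrow> real" where
  "opt_score n V psi lam = Max (score n V psi lam ` assignments n V)"

definition best_other :: "nat set \<Rightarrow> (nat \<Rightarrow> nat \<Rightarrow> real) \<Rightarrow> nat \<Rightarrow> nat \<Rightarrow> real" where
  "best_other V psi alpha j = Max (psi j ` (V - {alpha}))"

definition gain :: "nat set \<Rightarrow> (nat \<Rightarrow> nat \<Rightarrow> real) \<Rightarrow> nat \<Rightarrow> nat \<Rightarrow> real" where
  "gain V psi alpha j = psi j alpha - best_other V psi alpha j"

text \<open>All assignments the alpha-pass algorithm can form, under any tie-breaking in the
  sort and in the choice of a best value different from alpha: for some alpha and some
  k in 1..n, the set S of the first k sorted vertices is a top-k set for the gain,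
  S gets alpha, every other vertex gets a maximizer of psi_j over V - {alpha}.\<close>
definition alpha_pass_candidates :: "nat \<Rightarrow> nat set \<Rightarrow> (nat \<Rightarrow> nat \<Rightarrow> real) \<Rightarrow> (nat \<Rightarrow> nat) set" where
  "alpha_pass_candidates n V psi =
     {x \<in> assignments n V. \<exists>alpha\<in>V. \<exists>S\<subseteq>{1..n}. card S \<in> {1..n} \<and>
        (\<forall>i\<in>S. \<forall>j\<in>{1..n} - S. gain V psi alpha j \<le> gain V psi alpha i) \<and>
        (\<forall>j\<in>S. x j = alpha) \<and>
        (\<forall>j\<in>{1..n} - S. x j \<in> V - {alpha} \<and> psi j (x j) = best_other V psi alpha j)}"

text \<open>Score of the alpha-pass output; taking the maximum over all candidates makes this
  the best output over all possible tie-breakings.\<close>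
definition alpha_pass_score :: "nat \<Rightarrow> nat set \<Rightarrow> (nat \<Rightarrow> nat \<Rightarrow> real) \<Rightarrow> real \<Rightarrow> real" where
  "alpha_pass_score n V psi lam = Max (score n V psi lam ` alpha_pass_candidates n V psi)"

end

theory Submission imports Defs "HOL-Real_Asymp.Real_Asymp" begin

definition gg :: "nat \<Rightarrow> nat" where "gg n = nat \<lfloor>real n / (ln (real n) + 1)\<rfloor>"
definition PS :: "nat \<Rightarrow> nat \<Rightarrow> nat \<Rightarrow> real" where
 "PS n j v = (if v = 2*j+1 then ln (real n) + 1 else if v = 2*((j-1) div gg n) then ln (real n) else 0)"
definition VV :: "nat \<Rightarrow> nat set" where "VV n = {0..2*n+1}"

lemma ln_nat_nonneg: "0 \<le> ln (real n)"
  by (cases "n = 0") auto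

lemma PS_nonneg: "PS n j v \<ge> 0"
  using ln_nat_nonneg[of n] by (simp add: PS_def)

lemma PS_le: "PS n j v \<le> ln (real n) + 1"
  using ln_nat_nonneg[of n] by (simp add: PS_def)

lemma PS_le2: "v \<noteq> 2*j+1 \<Longrightarrow> PS n j v \<le> ln (real n)"
  using ln_nat_nonneg[of n] by (simp add: PS_def)

lemma PS_eq_b: "PS n j v = ln (real n) + 1 \<longleftrightarrow> v = 2*j+1"
  using ln_nat_nonneg[of n] by (auto simp add: PS_def)

lemma PS_odd_other: "i \<noteq> j \<Longrightarrow> PS n i (2*j+1) = 0"
proof -
  assume "i \<noteq> j"
  moreover have "\<And>k::nat. 2*j+1 \<noteq> 2*k" by presburger
  ultimately show ?thesis by (simp add: PS_def)
qed

lemma gg_pos: "n \<ge> 1 \<Longrightarrow> gg n \<ge> 1"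
proof -
  assume n: "n \<ge> 1"
  have "ln (real n) \<le> real n - 1" using n by (intro ln_le_minus_one) auto
  hence "1 \<le> real n / (ln (real n) + 1)" using ln_nat_nonneg[of n] by (simp add: field_simps)
  hence "1 \<le> \<lfloor>real n / (ln (real n) + 1)\<rfloor>" by linarith
  thus ?thesis unfolding gg_def by linarith
qed

lemma gg_le: "real (gg n) \<le> real n / (ln (real n) + 1)"
proof -
  have "0 \<le> real n / (ln (real n) + 1)" using ln_nat_nonneg[of n] by simp
  thus ?thesis unfolding gg_def by (simp add: of_nat_nat)
qed

lemma gg_ge: "real (gg n) \<ge> real n / (ln (real n) + 1) - 1"
proof -
  have "0 \<le> real n / (ln (real n) + 1)" using ln_nat_nonneg[of n] by simp
  thus ?thesis unfolding gg_def by (simp add: of_nat_nat)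
qed

lemma gg_le_n: "gg n \<le> n"
proof -
  have "real n / (ln (real n) + 1) \<le> real n" using ln_nat_nonneg[of n]
    by (simp add: divide_le_eq_1 field_simps)
  thus ?thesis using gg_le[of n] by linarith
qed

lemma score_eq:
  assumes "finite V" "x \<in> assignments n V"
  shows "score n V psi 1 x = (\<Sum>j=1..n. psi j (x j) + ln (real (cnt n x (x j))))"
proof -
  have img: "x ` {1..n} \<subseteq> V" using assms(2) by (auto simp: assignments_def PiE_def)
  have "(\<Sum>v\<in>V. xlogx (cnt n x v)) = (\<Sum>v\<in>V. \<Sum>j\<in>{j \<in> {1..n}. x j = v}. ln (real (cnt n x (x j))))"
  proof (rule sum.cong[OF refl])
    fix v assume "v \<in> V"
    have "(\<Sum>j\<in>{j\<in>{1..n}. x j = v}. ln (real (cnt n x (x j)))) = (\<Sum>j\<in>{j\<in>{1..n}. x j = v}. ln (real (cnt n x v)))"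
      by (rule sum.cong) auto
    hence "(\<Sum>j\<in>{j\<in>{1..n}. x j = v}. ln (real (cnt n x (x j)))) = real (cnt n x v) * ln (real (cnt n x v))"
      by (simp add: cnt_def)
    moreover have "xlogx (cnt n x v) = real (cnt n x v) * ln (real (cnt n x v))"
      by (simp add: xlogx_def)
    ultimately show "xlogx (cnt n x v) = (\<Sum>j\<in>{j\<in>{1..n}. x j = v}. ln (real (cnt n x (x j))))"
      by linarith
  qed
  also have "\<dots> = (\<Sum>j=1..n. ln (real (cnt n x (x j))))"
    using sum.group[of "{1..n}" V x "\<lambda>j. ln (real (cnt n x (x j)))"] img assms(1) by simp
  finally show ?thesis unfolding score_def by (simp add: sum.distrib)
qed

lemma finite_VV: "finite (VV n)" by (simp add: VV_def)

lemma best_other_ge: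
  assumes "u \<in> VV n" "u \<noteq> alpha"
  shows "PS n j u \<le> best_other (VV n) (PS n) alpha j"
  unfolding best_other_def using assms finite_VV[of n] by (intro Max_ge) auto

lemma best_other_le:
  assumes "\<And>u. u \<in> VV n \<Longrightarrow> u \<noteq> alpha \<Longrightarrow> PS n j u \<le> c" "u0 \<in> VV n" "u0 \<noteq> alpha"
  shows "best_other (VV n) (PS n) alpha j \<le> c"
  unfolding best_other_def using assms finite_VV[of n] by (subst Max_le_iff) auto

lemma card_group_le:
  assumes "g \<ge> 1"
  shows "card {j\<in>{1..n}. a = 2*((j-1) div g)} \<le> g"
proof -
  have "{j\<in>{1..n}. a = 2*((j-1) div g)} \<subseteq> {(a div 2)*g+1 .. (a div 2)*g+g}"
  proof
    fix j assume j: "j \<in> {j\<in>{1..n}. a = 2*((j-1) div g)}"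
    hence q: "a div 2 = (j-1) div g" and j1: "j \<ge> 1" by auto
    define m where "m = j - 1"
    have e1: "m div g * g \<le> m" using div_mult_mod_eq[of m g] by linarith
    have e2: "m < m div g * g + g" using div_mult_mod_eq[of m g] mod_less_divisor[of g m] assms by linarith
    have "(j-1) div g * g + 1 \<le> j" "j \<le> (j-1) div g * g + g" using e1 e2 j1 unfolding m_def by arith+
    with q show "j \<in> {(a div 2)*g+1 .. (a div 2)*g+g}" by simp
  qed
  from card_mono[OF _ this] show ?thesis by simp
qed

lemma card_odd_le: "card {j\<in>{1..n}. (a::nat) = 2*j+1} \<le> 1"
proof -
  have "{j\<in>{1..n}. a = 2*j+1} \<subseteq> {a div 2}" by auto
  from card_mono[OF _ this] show ?thesis by simp
qed

lemma sum_PS_le: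
  assumes "n \<ge> 1"
  shows "(\<Sum>j=1..n. PS n j a) \<le> (1 + real (gg n)) * (ln (real n) + 1)"
proof -
  let ?b = "ln (real n) + 1"
  have "(\<Sum>j=1..n. PS n j a) \<le> (\<Sum>j=1..n. (if a = 2*j+1 then ?b else 0) + (if a = 2*((j-1) div gg n) then ?b else 0))"
    by (intro sum_mono) (auto simp: PS_def)
  also have "\<dots> = (\<Sum>j\<in>{j\<in>{1..n}. a = 2*j+1}. ?b) + (\<Sum>j\<in>{j\<in>{1..n}. a = 2*((j-1) div gg n)}. ?b)"
    by (subst sum.distrib) (simp only: sum.inter_filter[OF finite_atLeastAtMost])
  also have "\<dots> = real (card {j\<in>{1..n}. a = 2*j+1}) * ?b + real (card {j\<in>{1..n}. a = 2*((j-1) div gg n)}) * ?b"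
    by simp
  also have "\<dots> \<le> 1 * ?b + real (gg n) * ?b"
    using card_odd_le[of n a] card_group_le[OF gg_pos[OF assms], of n a] ln_nat_nonneg[of n]
    by (intro add_mono mult_right_mono) auto
  finally show ?thesis by (simp add: algebra_simps)
qed

lemma cand_bound:
  assumes n: "n \<ge> 1" and x: "x \<in> alpha_pass_candidates n (VV n) (PS n)"
  shows "score n (VV n) (PS n) 1 x \<le> (real n + 1 + real (gg n)) * (ln (real n) + 1)"
proof -
  let ?b = "ln (real n) + 1"
  have b0: "0 \<le> ln (real n)" by (rule ln_nat_nonneg)
  from x obtain alpha S where xa: "x \<in> assignments n (VV n)" and alpha: "alpha \<in> VV n"
    and S: "S \<subseteq> {1..n}" "card S \<in> {1..n}"
    and top: "\<forall>i\<in>S. \<forall>j\<in>{1..n} - S. gain (VV n) (PS n) alpha j \<le> gain (VV n) (PS n) alpha i"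
    and inS: "\<forall>j\<in>S. x j = alpha"
    and outS: "\<forall>j\<in>{1..n} - S. x j \<in> VV n - {alpha} \<and> PS n j (x j) = best_other (VV n) (PS n) alpha j"
    unfolding alpha_pass_candidates_def by blast
  have Sne: "S \<noteq> {}" using S by auto
  have xo: "x j = 2*j+1" if j: "j \<in> {1..n} - S" for j
  proof (cases "alpha = 2*j+1")
    case False
    have jV: "2*j+1 \<in> VV n" using j by (auto simp: VV_def)
    have jA: "2*j+1 \<noteq> alpha" using False by simp
    have "PS n j (2*j+1) \<le> best_other (VV n) (PS n) alpha j"
      using best_other_ge[OF jV jA] by auto
    moreover have "best_other (VV n) (PS n) alpha j \<le> ?b"
      using best_other_le[OF _ jV jA, of j ?b] PS_le by auto
    ultimately have "PS n j (x j) = ?b" using outS j by (simp add: PS_def)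
    thus ?thesis using PS_eq_b by blast
  next
    case True
    from Sne obtain i where i: "i \<in> S" by auto
    have ij: "i \<noteq> j" using i j by auto
    have iV: "2*i+1 \<in> VV n" using i S by (auto simp: VV_def)
    have iA: "2*i+1 \<noteq> alpha" using True ij by simp
    have "PS n i (2*i+1) \<le> best_other (VV n) (PS n) alpha i"
      using best_other_ge[OF iV iA] .
    hence gi: "gain (VV n) (PS n) alpha i \<le> - ?b"
      using PS_odd_other[OF ij, of n] True by (simp add: gain_def PS_def)
    have "0 \<in> VV n" "(0::nat) \<noteq> alpha" using True by (auto simp: VV_def)
    hence "best_other (VV n) (PS n) alpha j \<le> ln (real n)"
      using best_other_le[of n alpha j "ln (real n)" 0] PS_le2[of _ j n] True by auto
    hence gj: "gain (VV n) (PS n) alpha j \<ge> 1"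
      using True by (simp add: gain_def PS_def)
    have "gain (VV n) (PS n) alpha j \<le> gain (VV n) (PS n) alpha i" using top i j by blast
    with gi gj b0 show ?thesis by linarith
  qed
  have termb: "PS n j (x j) + ln (real (cnt n x (x j))) \<le> PS n j alpha + ?b" if j: "j \<in> {1..n}" for j
  proof (cases "j \<in> S")
    case True
    have "card {i \<in> {1..n}. x i = x j} \<le> card {1..n}"
      by (rule card_mono) auto
    hence "cnt n x (x j) \<le> n" unfolding cnt_def by simp
    hence "ln (real (cnt n x (x j))) \<le> ln (real n)"
      using b0 by (cases "cnt n x (x j) = 0") auto
    thus ?thesis using True inS by simp
  next
    case False
    hence jo: "j \<in> {1..n} - S" using j by simp
    have "{i \<in> {1..n}. x i = x j} = {j}"
    proof (intro equalityI subsetI)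
      fix i assume i: "i \<in> {i \<in> {1..n}. x i = x j}"
      show "i \<in> {j}"
      proof (cases "i \<in> S")
        case True
        hence "x i = alpha" using inS by auto
        moreover have "x j \<noteq> alpha" using outS jo by auto
        ultimately show ?thesis using i by simp
      next
        case False
        hence "x i = 2*i+1" using xo i by auto
        thus ?thesis using i xo[OF jo] by simp
      qed
    qed (use j in auto)
    hence "cnt n x (x j) = 1" by (simp add: cnt_def)
    moreover have "PS n j (x j) = ?b" using xo[OF jo] by (simp add: PS_def)
    ultimately show ?thesis using PS_nonneg[of n j alpha] by simp
  qed
  have "score n (VV n) (PS n) 1 x = (\<Sum>j=1..n. PS n j (x j) + ln (real (cnt n x (x j))))"
    by (rule score_eq[OF finite_VV xa])
  also have "\<dots> \<le> (\<Sum>j=1..n. PS n j alpha + ?b)" by (intro sum_mono termb) auto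
  also have "\<dots> = (\<Sum>j=1..n. PS n j alpha) + real n * ?b" by (simp add: sum.distrib)
  also have "\<dots> \<le> (1 + real (gg n)) * ?b + real n * ?b" using sum_PS_le[OF n, of alpha] by simp
  finally show ?thesis by (simp add: algebra_simps)
qed

lemma finite_assign: "finite V \<Longrightarrow> finite (assignments n V)"
  unfolding assignments_def by (intro finite_PiE) auto

lemma opt_lower:
  assumes n: "n \<ge> 1"
  shows "opt_score n (VV n) (PS n) 1 \<ge> real n * ln (real n) + real (n - gg n) * ln (real (gg n))"
proof -
  let ?g = "gg n"
  have g1: "?g \<ge> 1" by (rule gg_pos[OF n])
  define y where "y = restrict (\<lambda>j. 2*((j-1) div ?g)) {1..n}"
  have yA: "y \<in> assignments n (VV n)"
  proof -
    have "\<forall>j\<in>{1..n}. 2*((j-1) div ?g) \<le> 2*n+1"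
    proof
      fix j assume "j \<in> {1..n}"
      have "(j-1) div ?g \<le> j - 1" by (rule div_le_dividend)
      moreover have "j - 1 \<le> n" using \<open>j \<in> {1..n}\<close> by auto
      ultimately show "2*((j-1) div ?g) \<le> 2*n+1" by linarith
    qed
    thus ?thesis unfolding assignments_def y_def VV_def by auto
  qed
  have ps: "PS n j (y j) = ln (real n)" if "j \<in> {1..n}" for j
  proof -
    have A: "\<And>k::nat. 2*k \<noteq> 2*j+1" by presburger
    have "2*((j-1) div gg n) \<noteq> 2*j+1" by (rule A)
    thus ?thesis using that unfolding y_def PS_def by auto
  qed
  have c1: "cnt n y (y j) \<ge> 1" if "j \<in> {1..n}" for j
  proof -
    have "{j} \<subseteq> {i \<in> {1..n}. y i = y j}" using that by auto
    from card_mono[OF _ this] show ?thesis unfolding cnt_def by simp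
  qed
  have cg: "cnt n y (y j) \<ge> ?g" if j: "j \<in> {1..n - ?g}" for j
  proof -
    define q where "q = (j-1) div ?g"
    have e1: "q * ?g \<le> j - 1" unfolding q_def using div_mult_mod_eq[of "j-1" ?g] by linarith
    have sub: "{q*?g+1 .. q*?g+?g} \<subseteq> {i \<in> {1..n}. y i = y j}"
    proof
      fix i assume i: "i \<in> {q*?g+1 .. q*?g+?g}"
      obtain r where r: "i - 1 = r + q*?g" "r < ?g"
        using i by (intro that[of "i - 1 - q*?g"]) auto
      have "(i-1) div ?g = q" using r g1 by simp
      moreover have "i \<le> n" using i e1 j by auto
      moreover have "1 \<le> i" using i by auto
      ultimately show "i \<in> {i \<in> {1..n}. y i = y j}" using j gg_le_n[of n]
        unfolding y_def q_def by auto
    qed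
    from card_mono[OF _ sub] show ?thesis unfolding cnt_def by simp
  qed
  have "score n (VV n) (PS n) 1 y = (\<Sum>j=1..n. PS n j (y j) + ln (real (cnt n y (y j))))"
    by (rule score_eq[OF finite_VV yA])
  also have "\<dots> = real n * ln (real n) + (\<Sum>j=1..n. ln (real (cnt n y (y j))))"
    using ps by (simp add: sum.distrib)
  finally have sc: "score n (VV n) (PS n) 1 y = real n * ln (real n) + (\<Sum>j=1..n. ln (real (cnt n y (y j))))" .
  have "(\<Sum>j\<in>{1..n - ?g}. ln (real ?g)) \<le> (\<Sum>j\<in>{1..n - ?g}. ln (real (cnt n y (y j))))"
  proof (intro sum_mono)
    fix j assume "j \<in> {1..n - ?g}"
    hence "real ?g \<le> real (cnt n y (y j))" using cg by simp
    thus "ln (real ?g) \<le> ln (real (cnt n y (y j)))" using g1 by simp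
  qed
  also have "\<dots> \<le> (\<Sum>j=1..n. ln (real (cnt n y (y j))))"
    using c1 by (intro sum_mono2) auto
  finally have "real (n - ?g) * ln (real ?g) \<le> (\<Sum>j=1..n. ln (real (cnt n y (y j))))" by simp
  hence "real n * ln (real n) + real (n - gg n) * ln (real (gg n)) \<le> score n (VV n) (PS n) 1 y"
    using sc by simp
  also have "\<dots> \<le> opt_score n (VV n) (PS n) 1"
    unfolding opt_score_def using yA finite_assign[OF finite_VV] by (intro Max_ge) auto
  finally show ?thesis .
qed

lemma ap_upper:
  assumes n: "n \<ge> 1"
  shows "alpha_pass_score n (VV n) (PS n) 1 \<le> (real n + 1 + real (gg n)) * (ln (real n) + 1)"
proof -
  define x0 where "x0 = restrict (\<lambda>j. 0::nat) {1..n}"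
  have "x0 \<in> alpha_pass_candidates n (VV n) (PS n)"
    unfolding alpha_pass_candidates_def
  proof (intro CollectI conjI bexI[of _ 0] exI[of _ "{1..n}"])
    show "x0 \<in> assignments n (VV n)" unfolding x0_def assignments_def VV_def by auto
  qed (use n in \<open>auto simp: x0_def VV_def\<close>)
  hence ne: "alpha_pass_candidates n (VV n) (PS n) \<noteq> {}" by auto
  have fin: "finite (alpha_pass_candidates n (VV n) (PS n))"
    by (rule finite_subset[OF _ finite_assign[OF finite_VV]]) (auto simp: alpha_pass_candidates_def)
  show ?thesis unfolding alpha_pass_score_def using ne fin cand_bound[OF n]
    by (subst Max_le_iff) auto
qed

lemma lim_ratio: "((\<lambda>n::nat. ((real n+1)*(ln (real n)+1) + real n) / (real n * ln (real n) + (real n - real n/(ln (real n)+1)) * (ln (real n) - ln (2*(ln (real n) + 1))))) \<longlongrightarrow> 1/2) sequentially"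
  by real_asymp

lemma ev1: "eventually (\<lambda>n::nat. real n / (2*(ln (real n)+1)) \<ge> 1) sequentially"
  by real_asymp

lemma ev2: "eventually (\<lambda>n::nat. 0 < real n * ln (real n) + (real n - real n/(ln (real n)+1)) * (ln (real n) - ln (2*(ln (real n) + 1)))) sequentially"
  by real_asymp

lemma key_bounds:
  assumes n: "n \<ge> 1" and h1: "real n / (2*(ln (real n)+1)) \<ge> 1"
  shows "alpha_pass_score n (VV n) (PS n) 1 \<le> (real n+1)*(ln (real n)+1) + real n"
    and "opt_score n (VV n) (PS n) 1 \<ge> real n * ln (real n) + (real n - real n/(ln (real n)+1)) * (ln (real n) - ln (2*(ln (real n) + 1)))"
proof -
  let ?L = "ln (real n)"
  have L0: "0 \<le> ?L" by (rule ln_nat_nonneg)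
  have gl: "real (gg n) * (?L + 1) \<le> real n" using gg_le[of n] L0 by (simp add: field_simps)
  show "alpha_pass_score n (VV n) (PS n) 1 \<le> (real n+1)*(?L+1) + real n"
    using ap_upper[OF n] gl by (simp add: algebra_simps)
  have a1: "real (n - gg n) \<ge> real n - real n/(?L+1)" using gg_le[of n] gg_le_n[of n] by simp
  have a2: "real n - real n/(?L+1) \<ge> 0" using L0 by (simp add: field_simps)
  have "real (gg n) \<ge> real n / (2*(?L+1))"
  proof -
    define t where "t = real n / (?L+1)"
    have e: "real n / (2*(?L+1)) = t / 2" unfolding t_def by simp
    have "t - 1 \<le> real (gg n)" using gg_ge[of n] unfolding t_def .
    moreover have "1 \<le> t / 2" using h1 unfolding e .
    ultimately show ?thesis unfolding e by linarith
  qed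
  hence "ln (real (gg n)) \<ge> ln (real n / (2*(?L+1)))" using h1 by simp
  moreover have "ln (real n / (2*(?L+1))) = ?L - ln (2*(?L+1))" 
  proof -
    have "0 < 2*(?L+1)" using L0 by simp
    moreover have "0 < real n" using n by simp
    ultimately show ?thesis by (simp add: ln_div)
  qed
  ultimately have b1: "ln (real (gg n)) \<ge> ?L - ln (2*(?L+1))" by simp
  have "ln (real n / (2*(?L+1))) \<ge> 0" using h1 by (rule ln_ge_zero)
  hence b2: "?L - ln (2*(?L+1)) \<ge> 0" using \<open>ln (real n / (2*(?L+1))) = _\<close> by linarith
  have "(real n - real n/(?L+1)) * (?L - ln (2*(?L+1))) \<le> real (n - gg n) * ln (real (gg n))"
    using a1 a2 b1 b2 by (intro mult_mono) auto
  thus "opt_score n (VV n) (PS n) 1 \<ge> real n * ?L + (real n - real n/(?L+1)) * (?L - ln (2*(?L+1)))"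
    using opt_lower[OF n] by linarith
qed

theorem theorem8:
  shows "\<exists>(Vs :: nat \<Rightarrow> nat set) (psi :: nat \<Rightarrow> nat \<Rightarrow> nat \<Rightarrow> real) (lam :: real).
     lam > 0 \<and>
     (\<forall>n. finite (Vs n) \<and> card (Vs n) \<ge> 2 \<and> (\<forall>j v. psi n j v \<ge> 0)) \<and>
     (\<forall>\<^sub>F n in sequentially. opt_score n (Vs n) (psi n) lam > 0) \<and>
     (\<forall>e>0. \<forall>\<^sub>F n in sequentially.
        alpha_pass_score n (Vs n) (psi n) lam / opt_score n (Vs n) (psi n) lam \<le> 1/2 + e)"
proof (intro exI[of _ VV] exI[of _ PS] exI[of _ "1::real"] conjI allI impI)
  show "(0::real) < 1" by simp
next
  fix n show "finite (VV n)" by (rule finite_VV)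
next
  fix n show "card (VV n) \<ge> 2" by (simp add: VV_def)
next
  fix n j v show "PS n j v \<ge> 0" by (rule PS_nonneg)
next
  have "eventually (\<lambda>n::nat. n \<ge> 1) sequentially" by (rule eventually_ge_at_top)
  with ev1 ev2 show "\<forall>\<^sub>F n in sequentially. opt_score n (VV n) (PS n) 1 > 0"
  proof eventually_elim
    case (elim n)
    thus ?case using key_bounds(2)[of n] by linarith
  qed
next
  fix e :: real assume e: "e > 0"
  have "eventually (\<lambda>n::nat. ((real n+1)*(ln (real n)+1) + real n) / (real n * ln (real n) + (real n - real n/(ln (real n)+1)) * (ln (real n) - ln (2*(ln (real n) + 1)))) < 1/2 + e) sequentially"
    using order_tendstoD(2)[OF lim_ratio] e by simp
  moreover have "eventually (\<lambda>n::nat. n \<ge> 1) sequentially" by (rule eventually_ge_at_top)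
  ultimately show "\<forall>\<^sub>F n in sequentially.
        alpha_pass_score n (VV n) (PS n) 1 / opt_score n (VV n) (PS n) 1 \<le> 1/2 + e"
    using ev1 ev2
  proof eventually_elim
    case (elim n)
    let ?U = "(real n+1)*(ln (real n)+1) + real n"
    let ?Lo = "real n * ln (real n) + (real n - real n/(ln (real n)+1)) * (ln (real n) - ln (2*(ln (real n) + 1)))"
    have A: "alpha_pass_score n (VV n) (PS n) 1 \<le> ?U" and O: "opt_score n (VV n) (PS n) 1 \<ge> ?Lo"
      using key_bounds[of n] elim by auto
    have U0: "0 \<le> ?U" using ln_nat_nonneg[of n] by simp
    have "alpha_pass_score n (VV n) (PS n) 1 / opt_score n (VV n) (PS n) 1 \<le> ?U / ?Lo"
      using A O U0 elim by (intro frac_le) auto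
    thus ?case using elim by linarith
  qed
qed

end
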